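(* Let $\mathbf U$ be a real $3\times3$ positive-definite symmetric matrix, $|\hat{\mathbf e}|=1$, $\hat{\mathbf U}=(-\mathbf I+2\hat{\mathbf e}\otimes\hat{\mathbf e})\mathbf U(-\mathbf I+2\hat{\mathbf e}\otimes\hat{\mathbf e})$, and let $\hat{\mathbf R}\in\mathrm{SO}(3)$, nonzero $\mathbf a,\mathbf n\in\mathbb R^3$ satisfy $\hat{\mathbf R}\hat{\mathbf U}=\mathbf U+\mathbf a\otimes\mathbf n$. Suppose the cofactor conditions hold: (CC1) the middle eigenvalue of $\mathbf U$ equals $1$; (CC2) $\mathbf a\cdot\mathbf U\,\mathrm{cof}(\mathbf U^2-\mathbf I)\mathbf n=0$; (CC3) $\mathrm{tr}\,\mathbf U^2-\det\mathbf U^2-\frac{|\mathbf a|^2|\mathbf n|^2}{4}-2\ge0$. For $f\in[0,1]$ let $\mathbf C_f=(\mathbf U+f\,\mathbf n\otimes\mathbf a)(\mathbf U+f\,\mathbf a\otimes\mathbf n)$, whose middle eigenvalue is $1$ for every $f\in[0,1]$, and denote its other two eigenvalues by $\lambda_1(f)^2\le1\le\lambda_3(f)^2$. Then $\lambda_1(f)^2<1<\lambda_3(f)^2$ for all $f\in[0,1]$ with $f\neq1/2$. In particular, the eigenvalues $\lambda_1,\lambda_3$ of $\mathbf U$ other than the middle one satisfy $\lambda_1<1<\lambda_3$.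
   Context: $\mathbf a\otimes\mathbf n$ is the matrix $\mathbf x\mapsto(\mathbf n\cdot\mathbf x)\mathbf a$; $\mathrm{cof}\,\mathbf A$ is the cofactor matrix of $\mathbf A$, $(\mathrm{cof}\,\mathbf A)_{ij}=(-1)^{i+j}\det$ of the submatrix obtained by deleting row $i$ and column $j$. $\lambda_1(f),\lambda_3(f)$ are taken positive. *)

theory Defs
  imports "HOL-Analysis.Analysis"
begin

definition outer :: "real^3 \<Rightarrow> real^3 \<Rightarrow> real^3^3" where
  "outer a n = (\<chi> i j. a $ i * n $ j)"

text \<open>Cofactor matrix of a 3x3 matrix. For 3x3 matrices the entry
  (-1)^(i+j) det(submatrix deleting row i and column j) equals the
  cyclic 2x2 determinant below (indices taken mod 3).\<close>
definition cof3 :: "real^3^3 \<Rightarrow> real^3^3" where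
  "cof3 A = (\<chi> i j. A $ (i+1) $ (j+1) * A $ (i+2) $ (j+2)
                   - A $ (i+1) $ (j+2) * A $ (i+2) $ (j+1))"

definition sorted_eigs :: "real^3^3 \<Rightarrow> real \<Rightarrow> real \<Rightarrow> real \<Rightarrow> bool" where
  "sorted_eigs A l1 l2 l3 \<longleftrightarrow> l1 \<le> l2 \<and> l2 \<le> l3 \<and>
     (\<forall>t. det (t *\<^sub>R mat 1 - A) = (t - l1) * (t - l2) * (t - l3))"

end

theory Submission
  imports Defs
begin

lemma three_eqs[simp]: "(4::3) = 1" "(5::3) = 2" by simp_all

definition e2 :: "real^3^3 \<Rightarrow> real" where
 "e2 A = A$1$1*A$2$2 - A$1$2*A$2$1 + A$1$1*A$3$3 - A$1$3*A$3$1 + A$2$2*A$3$3 - A$2$3*A$3$2"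

lemma charpoly: "det (t *\<^sub>R mat 1 - A) = t^3 - trace A * t^2 + e2 A * t - det A"
  by (simp add: det_3 trace_def sum_3 mat_def e2_def algebra_simps power2_eq_square power3_eq_cube)

lemma sym_entries: assumes "transpose U = U" shows "U$i$j = U$j$i"
  by (metis assms transpose_def vec_lambda_beta)

lemma disc_nonneg:
  fixes xa xb xc pa pb pc pd pe pf :: real
  assumes q0: "xa * (pa * xa+pb * xb+pc * xc) + xb * (pb * xa+pd * xb+pe * xc) + xc * (pc * xa+pe * xb+pf * xc) = 0"
   and nn: "xa * xa + xb * xb + xc * xc > 0"
  shows "0 \<le> (pa + pd + pf)^2 - 4 * (pa * pd - pb * pb + pa * pf - pc * pc + pd * pf - pe * pe)"
proof -
  let ?n = "xa * xa + xb * xb + xc * xc"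
  let ?t = "pa + pd + pf"
  let ?q = "xa * (pa * xa+pb * xb+pc * xc) + xb * (pb * xa+pd * xb+pe * xc) + xc * (pc * xa+pe * xb+pf * xc)"
  let ?D = "(pa + pd + pf)^2 - 4 * (pa * pd - pb * pb + pa * pf - pc * pc + pd * pf - pe * pe)"
  let ?S = "(2 * ?n * pa - ?t * (?n - xa * xa))^2 + (2 * ?n * pd - ?t * (?n - xb * xb))^2 + (2 * ?n * pf - ?t * (?n - xc * xc))^2
        + 2 * (2 * ?n * pb + ?t * xa * xb)^2 + 2 * (2 * ?n * pc + ?t * xa * xc)^2 + 2 * (2 * ?n * pe + ?t * xb * xc)^2"
  have eq: "2 * ?D * ?n^2 = ?S - 4 * ?t * ?n * ?q"
    by (simp add: algebra_simps power2_eq_square)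
  have "?S \<ge> 0" by simp
  then have "2 * ?D * ?n^2 \<ge> 0" unfolding eq q0 by simp
  then show ?thesis using nn by (simp add: zero_le_mult_iff)
qed

lemma smat: "(r *\<^sub>R mat 1) *v v = r *\<^sub>R (v::real^3)"
  by (simp add: vec_eq_iff forall_3 matrix_vector_mult_def sum_3 mat_def)

lemma eig_exist:
  assumes sym: "transpose U = U"
  shows "\<exists>l1 l2 l3. sorted_eigs U l1 l2 l3"
proof -
  define c2 where "c2 = trace U"
  define c1 where "c1 = e2 U"
  define c0 where "c0 = det U"
  define p where "p = (\<lambda>t::real. t^3 - c2 * t^2 + c1 * t - c0)"
  have pchar: "\<And>t. det (t *\<^sub>R mat 1 - U) = p t" unfolding p_def c2_def c1_def c0_def charpoly ..
  define M where "M = 1 + \<bar>c0\<bar> + \<bar>c1\<bar> + \<bar>c2\<bar>"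
  have M1: "M \<ge> 1" unfolding M_def by simp
  have MM: "M \<le> M^2" using M1 by (simp add: power2_eq_square)
  have M21: "1 \<le> M^2" using M1 by (simp add: one_le_power)
  have b2: "\<bar>c2 * M^2\<bar> \<le> \<bar>c2\<bar> * M^2" by (simp add: abs_mult)
  have b1: "\<bar>c1 * M\<bar> \<le> \<bar>c1\<bar> * M^2"
  proof -
    have "\<bar>c1 * M\<bar> = \<bar>c1\<bar> * M" using M1 by (simp add: abs_mult)
    also have "\<dots> \<le> \<bar>c1\<bar> * M^2" using MM by (simp add: mult_left_mono)
    finally show ?thesis .
  qed
  have b0: "\<bar>c0\<bar> \<le> \<bar>c0\<bar> * M^2" using M21 mult_left_mono[of 1 "M^2" "\<bar>c0\<bar>"] by simp
  have M3: "M^3 = (1 + \<bar>c0\<bar> + \<bar>c1\<bar> + \<bar>c2\<bar>) * M^2"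
    unfolding M_def by (simp add: power2_eq_square power3_eq_cube)
  have pM: "p M > 0"
    unfolding p_def using b0 b1 b2 M3 M21 by (simp add: abs_le_iff algebra_simps)
  have pmM: "p (-M) < 0"
    unfolding p_def using b0 b1 b2 M3 M21 by (simp add: abs_le_iff algebra_simps)
  have "continuous_on {-M..M} p" unfolding p_def by (intro continuous_intros)
  then obtain r where pr: "p r = 0" using IVT'[of p "-M" 0 M] pM pmM M1 by force
  have "\<not> invertible (r *\<^sub>R mat 1 - U)" using pr pchar invertible_det_nz by metis
  then obtain v where v0: "v \<noteq> 0" and vk: "(r *\<^sub>R mat 1 - U) *v v = 0"
    using invertible_left_inverse matrix_left_invertible_ker by metis
  have ev: "U *v v = r *\<^sub>R v" using vk by (simp add: algebra_simps smat)
  define s where "s = c2 - r"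
  define q where "q = c1 - r * c2 + r^2"
  define D where "D = s^2 - 4*q"
  have fact: "\<And>t. p t = (t - r) * (t^2 - s*t + q)"
    using pr unfolding p_def s_def q_def by (simp add: algebra_simps power2_eq_square power3_eq_cube)
  have D0: "D \<ge> 0"
  proof -
    define V where "V = U - r *\<^sub>R mat 1"
    have Vsym: "\<And>i j. V$i$j = V$j$i" unfolding V_def using sym_entries[OF sym] by (simp add: mat_def)
    have Vv: "V *v v = 0" unfolding V_def using ev by (simp add: algebra_simps smat)
    have DV: "D = (trace V)^2 - 4 * e2 V"
      unfolding D_def s_def q_def c2_def c1_def V_def
      by (simp add: trace_def e2_def sum_3 mat_def algebra_simps power2_eq_square)
    have Vv': "V$1$1 * v$1+V$1$2 * v$2+V$1$3 * v$3 = 0" "V$2$1 * v$1+V$2$2 * v$2+V$2$3 * v$3 = 0"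
       "V$3$1 * v$1+V$3$2 * v$2+V$3$3 * v$3 = 0"
      using Vv by (simp_all add: vec_eq_iff forall_3 matrix_vector_mult_def sum_3)
    have vvpos: "v$1 * v$1 + v$2 * v$2 + v$3 * v$3 > 0"
    proof -
      have "v \<bullet> v > 0" using v0 by simp
      thus ?thesis by (simp add: inner_vec_def sum_3)
    qed
    have "0 \<le> (V$1$1 + V$2$2 + V$3$3)^2 - 4 * (V$1$1 * V$2$2 - V$1$2 * V$1$2 + V$1$1 * V$3$3 - V$1$3 * V$1$3 + V$2$2 * V$3$3 - V$2$3 * V$2$3)"
      apply (rule disc_nonneg[where xa="v$1" and xb="v$2" and xc="v$3" and pa="V$1$1" and pb="V$1$2" and pc="V$1$3" and pd="V$2$2" and pe="V$2$3" and pf="V$3$3"])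
      using Vv' vvpos Vsym[of 2 1] Vsym[of 3 1] Vsym[of 3 2] by simp_all
    then show ?thesis unfolding DV by (simp add: trace_def sum_3 e2_def Vsym[of 2 1] Vsym[of 3 1] Vsym[of 3 2])
  qed
  define x where "x = (s - sqrt D)/2"
  define y where "y = (s + sqrt D)/2"
  have xy: "x \<le> y" unfolding x_def y_def using D0 by simp
  have w2: "sqrt D * sqrt D = D" using D0 by simp
  have sxy: "x + y = s" unfolding x_def y_def by (simp add: field_simps)
  have pxy: "x * y = q"
  proof -
    have "x * y = (s * s - sqrt D * sqrt D) / 4" unfolding x_def y_def by (simp add: field_simps)
    also have "\<dots> = q" by (simp only: w2) (simp add: D_def power2_eq_square)
    finally show ?thesis .
  qed
  have quad: "\<And>t. t^2 - s*t + q = (t - x) * (t - y)"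
  proof -
    fix t
    have "(t - x) * (t - y) = t^2 - (x + y) * t + x * y" by (simp add: algebra_simps power2_eq_square)
    thus "t^2 - s*t + q = (t - x) * (t - y)" unfolding sxy pxy by simp
  qed
  have P: "\<And>t. det (t *\<^sub>R mat 1 - U) = (t - r) * (t - x) * (t - y)"
    using pchar fact quad by (simp add: mult.assoc)
  show ?thesis
  proof (cases "r \<le> x")
    case True
    then show ?thesis using P xy unfolding sorted_eigs_def by blast
  next
    case False
    show ?thesis
    proof (cases "r \<le> y")
      case True
      have "sorted_eigs U x r y" unfolding sorted_eigs_def using P True False
        by (auto simp: algebra_simps)
      then show ?thesis by blast
    next
      case False2: False
      have "sorted_eigs U x y r" unfolding sorted_eigs_def using P False2 xy
        by (auto simp: algebra_simps)
      then show ?thesis by blast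
    qed
  qed
qed

definition crs :: "real^3 \<Rightarrow> real^3 \<Rightarrow> real^3" where
 "crs x y = (\<chi> i. x$(i+1) * y$(i+2) - x$(i+2)*y$(i+1))"

lemma det_rank1: "det (A + outer x y) = det A + x \<bullet> (cof3 A *v y)"
  by (simp add: det_3 outer_def cof3_def inner_vec_def matrix_vector_mult_def sum_3 algebra_simps)

lemma det_rank2: "det (A + outer x y + outer z w) = det A + x \<bullet> (cof3 A *v y) + z \<bullet> (cof3 A *v w)
   + crs x z \<bullet> (A *v crs y w)"
  by (simp add: det_3 outer_def cof3_def crs_def inner_vec_def matrix_vector_mult_def sum_3 algebra_simps)

lemma trace_sq: "trace (A ** A) = (trace A)^2 - 2 * e2 A"
  by (simp add: trace_def sum_3 matrix_matrix_mult_def e2_def algebra_simps power2_eq_square)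

lemma cof_sym_dot: assumes "transpose D = D" shows "n \<bullet> (cof3 D *v b) = b \<bullet> (cof3 D *v n)"
  using sym_entries[OF assms, of 2 1] sym_entries[OF assms, of 3 1] sym_entries[OF assms, of 3 2]
  by (simp add: cof3_def inner_vec_def matrix_vector_mult_def sum_3 algebra_simps)

lemma crs_scale_left: "crs (f *\<^sub>R b) n = f *\<^sub>R crs b n"
  by (simp add: crs_def vec_eq_iff algebra_simps)

lemma crs_lin_right: "crs n (f *\<^sub>R b + g *\<^sub>R n) = f *\<^sub>R crs n b"
  by (simp add: crs_def vec_eq_iff algebra_simps)

lemma sym_det_update:
  assumes "transpose D = D"
  shows "det (D + outer (f *\<^sub>R b) n + outer n (f *\<^sub>R b + g *\<^sub>R n)) =
     det D + 2*f*(b \<bullet> (cof3 D *v n)) + g*(n \<bullet> (cof3 D *v n)) + f^2 * (crs b n \<bullet> (D *v crs n b))"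
proof -
  have 1: "(f *\<^sub>R b) \<bullet> (cof3 D *v n) = f * (b \<bullet> (cof3 D *v n))" by simp
  have 2: "n \<bullet> (cof3 D *v (f *\<^sub>R b + g *\<^sub>R n)) = f * (b \<bullet> (cof3 D *v n)) + g * (n \<bullet> (cof3 D *v n))"
    using cof_sym_dot[OF assms, of n b]
    by (simp add: matrix_vector_right_distrib matrix_vector_mult_scaleR inner_add_right)
  have 3: "crs (f *\<^sub>R b) n \<bullet> (D *v crs n (f *\<^sub>R b + g *\<^sub>R n)) = f^2 * (crs b n \<bullet> (D *v crs n b))"
    unfolding crs_scale_left crs_lin_right by (simp add: matrix_vector_mult_scaleR power2_eq_square)
  show ?thesis unfolding det_rank2 1 2 3 by simp
qed

lemma mat_outer_r: "U ** outer a n = outer (U *v a) (n::real^3)"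
  by (simp add: vec_eq_iff outer_def matrix_matrix_mult_def matrix_vector_mult_def sum_distrib_right mult.assoc)

lemma mat_outer_l: "transpose U = U \<Longrightarrow> outer n a ** U = outer n (U *v (a::real^3))"
proof -
  assume "transpose U = U"
  then have s: "\<And>i j. U$i$j = U$j$i" using sym_entries by blast
  show ?thesis
  by (simp add: vec_eq_iff outer_def matrix_matrix_mult_def matrix_vector_mult_def sum_distrib_left mult.assoc mult.commute[of "U$_$_"] s[of _ "_::3"])
qed

lemma outer_outer: "outer n a ** outer a m = (a \<bullet> a) *\<^sub>R outer n (m::real^3)"
  by (simp add: vec_eq_iff forall_3 outer_def matrix_matrix_mult_def inner_vec_def sum_3 algebra_simps)

lemma mm_scale_l: "(f *\<^sub>R (A::real^3^3)) ** (B::real^3^3) = f *\<^sub>R (A ** B)"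
  by (simp add: vec_eq_iff forall_3 matrix_matrix_mult_def sum_3 algebra_simps)

lemma mm_scale_r: "(A::real^3^3) ** (f *\<^sub>R (B::real^3^3)) = f *\<^sub>R (A ** B)"
  by (simp add: vec_eq_iff forall_3 matrix_matrix_mult_def sum_3 algebra_simps)

lemma mm_add_l: "((A::real^3^3) + B) ** (C::real^3^3) = A ** C + B ** C"
  by (vector matrix_matrix_mult_def sum.distrib[symmetric] field_simps)

lemma mm_add_r: "(A::real^3^3) ** ((B::real^3^3) + C) = A ** B + A ** C"
  by (rule matrix_add_ldistrib)

lemma outer_pull_l: "outer (f *\<^sub>R x) y = f *\<^sub>R outer x (y::real^3)"
  by (simp add: vec_eq_iff outer_def)

lemma outer_pull_r: "outer x (f *\<^sub>R y) = f *\<^sub>R outer x (y::real^3)"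
  by (simp add: vec_eq_iff outer_def)

lemma outer_split_r: "outer x (y + z) = outer x y + outer x (z::real^3)"
  by (simp add: vec_eq_iff outer_def algebra_simps)

lemma Cf_expand:
  assumes "transpose U = U"
  shows "(U + f *\<^sub>R outer n a) ** (U + f *\<^sub>R outer a n) =
    U ** U + outer (f *\<^sub>R (U *v a)) n + outer n (f *\<^sub>R (U *v a) + (f^2 * (a \<bullet> a)) *\<^sub>R n)"
proof -
  have L: "(U + f *\<^sub>R outer n a) ** (U + f *\<^sub>R outer a n) =
     U ** U + (f *\<^sub>R outer (U *v a) n + (f *\<^sub>R outer n (U *v a) + (f * (f * (a \<bullet> a))) *\<^sub>R outer n n))"
    apply (simp only: mm_add_l mm_add_r)
    apply (simp only: mm_scale_l mm_scale_r)
    apply (simp only: outer_outer)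
    apply (simp only: mat_outer_r mat_outer_l[OF assms])
    by (simp only: add.assoc scaleR_scaleR mult.assoc) (simp only: ac_simps)
  have R: "U ** U + outer (f *\<^sub>R (U *v a)) n + outer n (f *\<^sub>R (U *v a) + (f^2 * (a \<bullet> a)) *\<^sub>R n) =
     U ** U + (f *\<^sub>R outer (U *v a) n + (f *\<^sub>R outer n (U *v a) + (f * (f * (a \<bullet> a))) *\<^sub>R outer n n))"
    by (simp only: outer_split_r outer_pull_l outer_pull_r add.assoc power2_eq_square mult.assoc)
  show ?thesis unfolding L R ..
qed

lemma trace_outer: "trace (outer x y) = x \<bullet> y"
  by (simp add: trace_def outer_def inner_vec_def sum_3)

lemma transpose_outer: "transpose (outer a n) = outer n a"
  by (simp add: transpose_def outer_def vec_eq_iff)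

lemma transpose_add3: "transpose (A + B) = transpose A + transpose (B::real^3^3)"
  by (simp add: transpose_def vec_eq_iff)

lemma transpose_scale3: "transpose (f *\<^sub>R A) = f *\<^sub>R transpose (A::real^3^3)"
  by (simp add: transpose_def vec_eq_iff)

lemma QQ_gen: "(- mat 1 + 2 *\<^sub>R outer e e) ** (- mat 1 + 2 *\<^sub>R outer e e) =
   mat 1 + (4 * (e \<bullet> e) - 4) *\<^sub>R outer e (e::real^3)"
  by (simp add: vec_eq_iff forall_3 outer_def matrix_matrix_mult_def mat_def inner_vec_def sum_3 algebra_simps)

lemma Q_sym: "transpose (- mat 1 + 2 *\<^sub>R outer e e) = (- mat 1 + 2 *\<^sub>R outer e (e::real^3))"
  by (simp add: transpose_def vec_eq_iff forall_3 outer_def mat_def mult.commute)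

lemma det_neg3: "det (- A) = - det (A::real^3^3)"
  by (simp add: det_3 algebra_simps)

lemma sq_minus_factor: "U ** U - mat 1 = (U - mat 1) ** (U + mat 1 :: real^3^3)"
  by (simp add: vec_eq_iff forall_3 matrix_matrix_mult_def mat_def sum_3 algebra_simps)

lemma sym_sq_minus: "transpose U = U \<Longrightarrow> transpose (U ** U - mat 1) = U ** U - (mat 1 :: real^3^3)"
proof -
  assume "transpose U = U"
  have "transpose (U ** U - mat 1) = transpose (U ** U) - (mat 1 :: real^3^3)"
    by (simp add: transpose_def vec_eq_iff mat_def)
  also have "\<dots> = U ** U - mat 1" using \<open>transpose U = U\<close> by (simp add: matrix_transpose_mul)
  finally show ?thesis .
qed

lemma dot_sym: "transpose U = U \<Longrightarrow> a \<bullet> (U *v w) = (U *v a) \<bullet> (w::real^3)"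
  using sym_entries[of U 2 1] sym_entries[of U 3 1] sym_entries[of U 3 2]
  by (simp add: inner_vec_def matrix_vector_mult_def sum_3 algebra_simps)

lemma sorted_coeffs:
  assumes "sorted_eigs A l1 l2 l3"
  shows "trace A = l1 + l2 + l3" "det A = l1 * l2 * l3" "e2 A = l1*l2 + l1*l3 + l2*l3"
proof -
  have P: "\<And>t. t^3 - trace A * t^2 + e2 A * t - det A = (t - l1) * (t - l2) * (t - l3)"
    using assms unfolding sorted_eigs_def charpoly by blast
  have h0: "- det A = - (l1 * l2 * l3)" using P[of 0] by simp
  have h1: "1 - trace A + e2 A - det A = (1 - l1) * (1 - l2) * (1 - l3)" using P[of 1] by simp
  have h2: "-1 - trace A - e2 A - det A = (-1 - l1) * (-1 - l2) * (-1 - l3)" using P[of "-1"] by simp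
  have h1': "1 - trace A + e2 A - det A = 1 - (l1+l2+l3) + (l1*l2 + l1*l3 + l2*l3) - l1*l2*l3"
    using h1 by (simp add: algebra_simps)
  have h2': "-1 - trace A - e2 A - det A = -1 - (l1+l2+l3) - (l1*l2 + l1*l3 + l2*l3) - l1*l2*l3"
    using h2 by (simp add: algebra_simps)
  show "det A = l1 * l2 * l3" using h0 by simp
  show "trace A = l1 + l2 + l3" using h0 h1' h2' by linarith
  show "e2 A = l1*l2 + l1*l3 + l2*l3" using h0 h1' h2' by linarith
qed

lemma final_real1:
  fixes l1 l2 l3 :: real
  assumes "l1 \<le> l2" "l2 \<le> l3" "(1 - l1) * (1 - l2) * (1 - l3) = 0"
    "l1 + l2 + l3 - l1 * l2 * l3 - 2 > 0"
  shows "l1 < 1 \<and> l2 = 1 \<and> 1 < l3"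
proof -
  have "l1 = 1 \<or> l2 = 1 \<or> l3 = 1" using assms(3) by auto
  moreover
  { assume "l1 = 1"
    then have "l2 + l3 - l2 * l3 - 1 > 0" using assms(4) by simp
    moreover have "(l2 - 1) * (l3 - 1) \<ge> 0" using assms(1,2) \<open>l1 = 1\<close> by simp
    ultimately have False by (simp add: algebra_simps) }
  moreover
  { assume "l3 = 1"
    then have "l1 + l2 - l1 * l2 - 1 > 0" using assms(4) by simp
    moreover have "(1 - l1) * (1 - l2) \<ge> 0" using assms(1,2) \<open>l3 = 1\<close> by simp
    ultimately have False by (simp add: algebra_simps) }
  moreover
  { assume h: "l2 = 1"
    then have g: "(1 - l1) * (l3 - 1) > 0" using assms(4) by (simp add: algebra_simps)
    have "l1 < 1"
    proof (rule ccontr)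
      assume "\<not> l1 < 1" then have "1 - l1 \<le> 0" by simp
      moreover have "l3 - 1 \<ge> 0" using assms(2) h by simp
      ultimately have "(1 - l1) * (l3 - 1) \<le> 0" by (simp add: mult_nonpos_nonneg)
      then show False using g by simp
    qed
    moreover have "1 < l3"
    proof (rule ccontr)
      assume "\<not> 1 < l3" then have "l3 - 1 \<le> 0" by simp
      moreover have "1 - l1 \<ge> 0" using assms(1) h by simp
      ultimately have "(1 - l1) * (l3 - 1) \<le> 0" by (simp add: mult_nonneg_nonpos)
      then show False using g by simp
    qed
    ultimately have ?thesis using h by simp }
  ultimately show ?thesis by blast
qed

lemma final_real2:
  fixes l1 l3 :: real
  assumes "l1 \<le> 1" "1 \<le> l3" "(1 - l1^2) * (l3^2 - 1) > 0"
  shows "l1 < 1 \<and> 1 < l3"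
proof -
  have "l3 \<noteq> 1" using assms(3) by auto
  then have l3: "1 < l3" using assms(2) by simp
  then have "l3^2 - 1 > 0" by (simp add: one_less_power)
  then have "1 - l1^2 > 0" using assms(3) zero_less_mult_pos2 by blast
  then have "l1 \<noteq> 1" by auto
  then show ?thesis using assms(1) l3 by simp
qed

lemma mm_diff_l: "((A::real^3^3) - B) ** (C::real^3^3) = A ** C - B ** C"
  by (vector matrix_matrix_mult_def sum_subtractf[symmetric] field_simps)

lemma mm_diff_r: "(A::real^3^3) ** ((B::real^3^3) - C) = A ** B - A ** C"
  by (vector matrix_matrix_mult_def sum_subtractf[symmetric] field_simps)

lemma grp3: "(x::'a::ab_group_add) + y + z - w = (x - w) + y + z"
  by (simp add: algebra_simps)

theorem corollary1:
  fixes U R :: "real^3^3" and e a n :: "real^3"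
  assumes U_sym: "transpose U = U"
    and U_pd: "\<forall>x. x \<noteq> 0 \<longrightarrow> x \<bullet> (U *v x) > 0"
    and e_unit: "norm e = 1"
    and R_SO3: "transpose R ** R = mat 1" "det R = 1"
    and a_nz: "a \<noteq> 0" and n_nz: "n \<noteq> 0"
    and twin: "R ** ((- mat 1 + 2 *\<^sub>R outer e e) ** U ** (- mat 1 + 2 *\<^sub>R outer e e))
               = U + outer a n"
    and CC1: "\<forall>l1 l2 l3. sorted_eigs U l1 l2 l3 \<longrightarrow> l2 = 1"
    and CC2: "a \<bullet> ((U ** cof3 (U ** U - mat 1)) *v n) = 0"
    and CC3: "trace (U ** U) - det (U ** U) - (norm a)\<^sup>2 * (norm n)\<^sup>2 / 4 - 2 \<ge> 0"
  shows "(\<forall>f l1 l2 l3. 0 \<le> f \<and> f \<le> 1 \<and> f \<noteq> 1/2 \<and>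
            sorted_eigs ((U + f *\<^sub>R outer n a) ** (U + f *\<^sub>R outer a n)) l1 l2 l3
            \<longrightarrow> l1 < 1 \<and> l2 = 1 \<and> 1 < l3)
       \<and> (\<forall>l1 l2 l3. sorted_eigs U l1 l2 l3 \<longrightarrow> l1 < 1 \<and> 1 < l3)"
proof -
  have Usym: "transpose U = U" by (rule U_sym)
  define Q where "Q = - mat 1 + 2 *\<^sub>R outer e e"
  have ee: "e \<bullet> e = 1" using e_unit by (metis power2_norm_eq_inner power_one)
  have QQ: "Q ** Q = mat 1" unfolding Q_def QQ_gen ee by simp
  have QQ': "\<And>Z::real^3^3. Q ** (Q ** Z) = Z" by (simp add: matrix_mul_assoc QQ)
  have Qt: "transpose Q = Q" unfolding Q_def by (rule Q_sym)
  have detQ: "det Q * det Q = 1" using det_mul[of Q Q] QQ by simp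
  define Qh where "Qh = Q ** U ** Q"
  have twin': "R ** Qh = U + outer a n" using twin unfolding Q_def Qh_def .
  have detQh: "det Qh = det U"
  proof -
    have "det Qh = det U * (det Q * det Q)" unfolding Qh_def det_mul by (simp add: algebra_simps)
    then show ?thesis using detQ by simp
  qed
  have detF: "det (U + outer a n) = det U"
  proof -
    have "det (U + outer a n) = det (R ** Qh)" by (simp add: twin')
    also have "\<dots> = det U" unfolding det_mul using R_SO3(2) detQh by simp
    finally show ?thesis .
  qed
  have kappa: "a \<bullet> (cof3 U *v n) = 0" using detF det_rank1[of U a n] by simp
  have QXQ: "\<And>X Y::real^3^3. (Q ** X ** Q) ** (Q ** Y ** Q) = Q ** (X ** Y) ** Q"
    by (simp add: matrix_mul_assoc[symmetric] QQ')
  have C1: "(U + outer n a) ** (U + outer a n) = Q ** (U ** U) ** Q"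
  proof -
    have tF: "transpose (U + outer a n) = U + outer n a" by (simp add: transpose_add3 transpose_outer Usym)
    have "(U + outer n a) ** (U + outer a n) = transpose (R ** Qh) ** (R ** Qh)" using twin' tF by simp
    also have "\<dots> = transpose Qh ** (transpose R ** R) ** Qh" by (simp add: matrix_transpose_mul matrix_mul_assoc)
    also have "\<dots> = transpose Qh ** Qh" using R_SO3(1) by simp
    also have "transpose Qh = Q ** U ** Q" unfolding Qh_def by (simp add: matrix_transpose_mul Qt Usym matrix_mul_assoc)
    finally show ?thesis unfolding Qh_def QXQ .
  qed
  define D where "D = U ** U - mat 1"
  have Dsym: "transpose D = D" unfolding D_def by (rule sym_sq_minus[OF Usym])
  have detC1: "det ((U + outer n a) ** (U + outer a n) - mat 1) = det D"
  proof -
    have "Q ** (U ** U) ** Q - mat 1 = Q ** D ** Q" unfolding D_def mm_diff_l mm_diff_r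
      by (simp add: QQ)
    then have "det (Q ** (U ** U) ** Q - mat 1) = det Q * det D * det Q" by (simp add: det_mul)
    also have "\<dots> = det D" using detQ by (simp add: algebra_simps)
    finally show ?thesis unfolding C1 .
  qed
  have trC1: "trace ((U + outer n a) ** (U + outer a n)) = trace (U ** U)"
  proof -
    have "trace ((Q ** (U ** U)) ** Q) = trace (Q ** (Q ** (U ** U)))" by (rule trace_mul_sym)
    then show ?thesis unfolding C1 QQ' .
  qed
  have detD: "det D = 0"
  proof -
    obtain l1 l2 l3 where tr: "sorted_eigs U l1 l2 l3" using eig_exist[OF Usym] by blast
    have "l2 = 1" using CC1 tr by blast
    moreover have "det (1 *\<^sub>R mat 1 - U) = (1 - l1) * (1 - l2) * (1 - l3)" using tr unfolding sorted_eigs_def by blast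
    ultimately have "det (1 *\<^sub>R mat 1 - U) = 0" by simp
    then have d1: "det (mat 1 - U) = 0" by simp
    have "det (U - mat 1) = - det (mat 1 - U)" using det_neg3[of "mat 1 - U"] by simp
    then have "det (U - mat 1) = 0" using d1 by simp
    then show ?thesis unfolding D_def sq_minus_factor det_mul by simp
  qed
  define b where "b = U *v a"
  define c where "c = a \<bullet> a"
  define K where "K = crs b n \<bullet> (D *v crs n b)"
  define N where "N = n \<bullet> (cof3 D *v n)"
  have alpha: "b \<bullet> (cof3 D *v n) = 0"
  proof -
    have "a \<bullet> ((U ** cof3 D) *v n) = a \<bullet> (U *v (cof3 D *v n))" by (simp add: matrix_vector_mul_assoc)
    also have "\<dots> = b \<bullet> (cof3 D *v n)" unfolding b_def by (rule dot_sym[OF Usym])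
    finally show ?thesis using CC2 unfolding D_def by simp
  qed
  have Cf: "\<And>f. (U + f *\<^sub>R outer n a) ** (U + f *\<^sub>R outer a n) - mat 1 =
      D + outer (f *\<^sub>R b) n + outer n (f *\<^sub>R b + (f^2 * c) *\<^sub>R n)"
    unfolding Cf_expand[OF Usym] D_def b_def c_def by (rule grp3)
  have detCf: "\<And>f. det ((U + f *\<^sub>R outer n a) ** (U + f *\<^sub>R outer a n) - mat 1) =
      det D + 2*f*(b \<bullet> (cof3 D *v n)) + (f^2 * c) * N + f^2 * K"
    unfolding Cf sym_det_update[OF Dsym] N_def K_def ..
  have NK: "c * N + K = 0" using detCf[of 1] detC1 alpha by simp
  have detCf0: "\<And>f. det ((U + f *\<^sub>R outer n a) ** (U + f *\<^sub>R outer a n) - mat 1) = 0"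
  proof -
    fix f :: real
    have "det ((U + f *\<^sub>R outer n a) ** (U + f *\<^sub>R outer a n) - mat 1) = f^2 * (c * N + K)"
      unfolding detCf detD alpha by (simp add: algebra_simps)
    then show "det ((U + f *\<^sub>R outer n a) ** (U + f *\<^sub>R outer a n) - mat 1) = 0" using NK by simp
  qed
  have trCf: "\<And>f. trace ((U + f *\<^sub>R outer n a) ** (U + f *\<^sub>R outer a n)) =
      trace (U ** U) + 2 * f * (b \<bullet> n) + f^2 * c * (n \<bullet> n)"
    unfolding Cf_expand[OF Usym] trace_add trace_outer b_def c_def
    by (simp add: inner_add_right inner_commute algebra_simps)
  have bn: "2 * (b \<bullet> n) = - (c * (n \<bullet> n))" using trCf[of 1] trC1 by simp
  have detFf: "\<And>f. det (U + f *\<^sub>R outer a n) = det U"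
  proof -
    fix f :: real
    have "U + f *\<^sub>R outer a n = U + outer (f *\<^sub>R a) n" by (simp add: outer_pull_l)
    then show "det (U + f *\<^sub>R outer a n) = det U" using det_rank1[of U "f *\<^sub>R a" n] kappa by simp
  qed
  have detCfv: "\<And>f. det ((U + f *\<^sub>R outer n a) ** (U + f *\<^sub>R outer a n)) = det (U ** U)"
  proof -
    fix f :: real
    have "transpose (U + f *\<^sub>R outer a n) = U + f *\<^sub>R outer n a"
      by (simp add: transpose_add3 transpose_scale3 transpose_outer Usym)
    then have "det (U + f *\<^sub>R outer n a) = det U" using detFf[of f] det_transpose by metis
    then show "det ((U + f *\<^sub>R outer n a) ** (U + f *\<^sub>R outer a n)) = det (U ** U)"
      using detFf[of f] by (simp add: det_mul)
  qed
  have cpos: "c > 0" unfolding c_def using a_nz by simp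
  have npos: "n \<bullet> n > 0" using n_nz by simp
  have cn: "(norm a)^2 * (norm n)^2 = c * (n \<bullet> n)" unfolding c_def by (simp add: power2_norm_eq_inner)
  have CC3': "trace (U ** U) - det (U ** U) - 2 \<ge> c * (n \<bullet> n) / 4" using CC3 cn by simp
  have part1: "\<forall>f l1 l2 l3. 0 \<le> f \<and> f \<le> 1 \<and> f \<noteq> 1/2 \<and>
            sorted_eigs ((U + f *\<^sub>R outer n a) ** (U + f *\<^sub>R outer a n)) l1 l2 l3
            \<longrightarrow> l1 < 1 \<and> l2 = 1 \<and> 1 < l3"
  proof (intro allI impI)
    fix f l1 l2 l3 :: real
    assume H: "0 \<le> f \<and> f \<le> 1 \<and> f \<noteq> 1/2 \<and>
            sorted_eigs ((U + f *\<^sub>R outer n a) ** (U + f *\<^sub>R outer a n)) l1 l2 l3"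
    define C where "C = (U + f *\<^sub>R outer n a) ** (U + f *\<^sub>R outer a n)"
    have se: "sorted_eigs C l1 l2 l3" using H unfolding C_def by blast
    have o: "l1 \<le> l2" "l2 \<le> l3" using se unfolding sorted_eigs_def by auto
    have p1: "det (1 *\<^sub>R mat 1 - C) = (1 - l1) * (1 - l2) * (1 - l3)" using se unfolding sorted_eigs_def by blast
    have "det (mat 1 - C) = - det (C - mat 1)" using det_neg3[of "C - mat 1"] by simp
    then have z: "(1 - l1) * (1 - l2) * (1 - l3) = 0" using p1 detCf0[of f] unfolding C_def by simp
    have tC: "trace C = l1 + l2 + l3" and dC: "det C = l1 * l2 * l3" using sorted_coeffs[OF se] by auto
    have fne: "f \<noteq> 1/2" using H by simp
    have sq: "(f - 1/2)^2 > 0" using fne by simp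
    have cnp: "c * (n \<bullet> n) > 0" using cpos npos by simp
    have "trace C - det C - 2 = trace (U ** U) - det (U ** U) - 2 - c * (n \<bullet> n) * (f - f^2)"
      unfolding C_def trCf detCfv using bn by (simp add: algebra_simps power2_eq_square)
    also have "\<dots> \<ge> c * (n \<bullet> n) * (f - 1/2)^2"
      using CC3' by (simp add: algebra_simps power2_eq_square)
    finally have "trace C - det C - 2 \<ge> c * (n \<bullet> n) * (f - 1/2)^2" .
    moreover have "c * (n \<bullet> n) * (f - 1/2)^2 > 0" using cnp sq by simp
    ultimately have g: "l1 + l2 + l3 - l1 * l2 * l3 - 2 > 0" using tC dC by simp
    show "l1 < 1 \<and> l2 = 1 \<and> 1 < l3" by (rule final_real1[OF o z g])
  qed
  have part2: "\<forall>l1 l2 l3. sorted_eigs U l1 l2 l3 \<longrightarrow> l1 < 1 \<and> 1 < l3"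
  proof (intro allI impI)
    fix l1 l2 l3 :: real
    assume se: "sorted_eigs U l1 l2 l3"
    have l2: "l2 = 1" using CC1 se by blast
    have o: "l1 \<le> 1" "1 \<le> l3" using se l2 unfolding sorted_eigs_def by auto
    have tU: "trace U = l1 + l2 + l3" and dU: "det U = l1 * l2 * l3" and eU: "e2 U = l1*l2 + l1*l3 + l2*l3"
      using sorted_coeffs[OF se] by auto
    have "trace (U ** U) - det (U ** U) - 2 = (1 - l1^2) * (l3^2 - 1)"
      unfolding trace_sq det_mul tU dU eU l2 by (simp add: algebra_simps power2_eq_square)
    moreover have "c * (n \<bullet> n) / 4 > 0" using cpos npos by simp
    ultimately have "(1 - l1^2) * (l3^2 - 1) > 0" using CC3' by simp
    then show "l1 < 1 \<and> 1 < l3" using final_real2[OF o] by blast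
  qed
  show ?thesis using part1 part2 by blast
qed

end
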